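(* Let $G$ be a 2-step nilpotent (connected, simply connected) Lie group with Lie algebra $\mathfrak{g}=\mathfrak{v}\oplus\mathfrak{z}$, where $\mathfrak{z}$ is the center, and let $\langle\cdot,\cdot\rangle$ be an inner product on $\mathfrak{v}$. Suppose that $J_\eta$ has rank $2$ for all $\eta\in\mathfrak{z}^*\setminus\{0\}$. Then $G$ satisfies Assumption (A) with the sublaplacian $L$ associated with $\langle\cdot,\cdot\rangle$, and also with any other sublaplacian associated with an inner product on any linear complement of $\mathfrak{z}$. Moreover, let $G_\mathbb{C}$ be the complexification of $G$, regarded as a real 2-step group with Lie algebra $\mathfrak{g}_\mathbb{C}=\mathfrak{v}_\mathbb{C}\oplus\mathfrak{z}_\mathbb{C}$, and endow $\mathfrak{v}_\mathbb{C}=\mathfrak{v}\oplus i\mathfrak{v}$ with the real inner product induced by $\langle\cdot,\cdot\rangle$ (i.e. $\langle x_R+ix_I,x'_R+ix'_I\rangle=\langle x_R,x'_R\rangle+\langle x_I,x_I'\rangle$). Then $G_\mathbb{C}$ with the associated sublaplacian satisfies Assumption (A).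
   Context: For a 2-step group with Lie algebra $\mathfrak{g}=\mathfrak{v}\oplus\mathfrak{z}$ ($\mathfrak{z}$ the center, $\mathfrak{v}$ a complement) and an inner product $\langle\cdot,\cdot\rangle$ on $\mathfrak{v}$, the associated sublaplacian is $L=-\sum_jX_j^2$ with $\{X_j\}$ an orthonormal basis of $\mathfrak{v}$, and for $\eta\in\mathfrak{z}^*$, $J_\eta$ is the skew-adjoint endomorphism of $\mathfrak{v}$ with $\eta([x,x'])=\langle J_\eta x,x'\rangle$ for all $x,x'\in\mathfrak{v}$. Assumption (A) for $(G,L)$: there exist integers $r_1,\dots,r_k>0$ and an orthogonal decomposition $\mathfrak{v}=\mathfrak{v}_1\oplus\dots\oplus\mathfrak{v}_k$ with orthogonal projections $P_j$ such that for all $\eta\in\mathfrak{z}^*\setminus\{0\}$ and all $j$, $J_\eta P_j=P_jJ_\eta$ and $J_\eta^2P_j$ has rank $2r_j$ and a unique nonzero eigenvalue. *)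

theory Defs
  imports "HOL-Analysis.Analysis"
begin

text \<open>A finite-dimensional real Lie algebra is modelled as a euclidean_space type 'g
  (only its real vector space structure is used) together with a bracket br.\<close>

definition lie_algebra :: "('g::euclidean_space \<Rightarrow> 'g \<Rightarrow> 'g) \<Rightarrow> bool" where
  "lie_algebra br \<longleftrightarrow> bilinear br \<and> (\<forall>x. br x x = 0) \<and>
     (\<forall>x y w. br x (br y w) + br y (br w x) + br w (br x y) = 0)"

definition two_step :: "('g::euclidean_space \<Rightarrow> 'g \<Rightarrow> 'g) \<Rightarrow> bool" where
  "two_step br \<longleftrightarrow> lie_algebra br \<and> (\<forall>x y w. br (br x y) w = 0) \<and> (\<exists>x y. br x y \<noteq> 0)"

definition center :: "('g::euclidean_space \<Rightarrow> 'g \<Rightarrow> 'g) \<Rightarrow> 'g set" where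
  "center br = {w. \<forall>x. br w x = 0}"

definition complement_of_center :: "('g::euclidean_space \<Rightarrow> 'g \<Rightarrow> 'g) \<Rightarrow> 'g set \<Rightarrow> bool" where
  "complement_of_center br V \<longleftrightarrow> subspace V \<and> V \<inter> center br = {0} \<and>
     (\<forall>g. \<exists>x\<in>V. \<exists>w\<in>center br. g = x + w)"

definition inner_product_on :: "'g::euclidean_space set \<Rightarrow> ('g \<Rightarrow> 'g \<Rightarrow> real) \<Rightarrow> bool" where
  "inner_product_on V ip \<longleftrightarrow>
     (\<forall>x\<in>V. \<forall>y\<in>V. ip x y = ip y x) \<and>
     (\<forall>x\<in>V. \<forall>y\<in>V. \<forall>z\<in>V. \<forall>a b. ip (a *\<^sub>R x + b *\<^sub>R y) z = a * ip x z + b * ip y z) \<and>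
     (\<forall>x\<in>V. x \<noteq> 0 \<longrightarrow> ip x x > 0)"

text \<open>Elements eta of z^* are represented by linear functionals on 'g (only their restriction
  to the centre matters, since [x,x'] lies in the centre).\<close>
definition Jmap :: "('g::euclidean_space \<Rightarrow> 'g \<Rightarrow> 'g) \<Rightarrow> 'g set \<Rightarrow> ('g \<Rightarrow> 'g \<Rightarrow> real)
    \<Rightarrow> ('g \<Rightarrow> real) \<Rightarrow> 'g \<Rightarrow> 'g" where
  "Jmap br V ip \<eta> x = (THE y. y \<in> V \<and> (\<forall>x'\<in>V. ip y x' = \<eta> (br x x')))"

definition oproj :: "('g::euclidean_space \<Rightarrow> 'g \<Rightarrow> real) \<Rightarrow> 'g set \<Rightarrow> 'g \<Rightarrow> 'g" where
  "oproj ip W x = (THE y. y \<in> W \<and> (\<forall>w\<in>W. ip (x - y) w = 0))"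

definition nonzero_dual_center :: "('g::euclidean_space \<Rightarrow> 'g \<Rightarrow> 'g) \<Rightarrow> ('g \<Rightarrow> real) \<Rightarrow> bool" where
  "nonzero_dual_center br \<eta> \<longleftrightarrow> linear \<eta> \<and> (\<exists>w\<in>center br. \<eta> w \<noteq> 0)"

definition assumptionA :: "('g::euclidean_space \<Rightarrow> 'g \<Rightarrow> 'g) \<Rightarrow> 'g set \<Rightarrow> ('g \<Rightarrow> 'g \<Rightarrow> real) \<Rightarrow> bool" where
  "assumptionA br V ip \<longleftrightarrow>
    (\<exists>(k::nat) (Vs :: nat \<Rightarrow> 'g set) (r :: nat \<Rightarrow> nat).
       (\<forall>j<k. r j > 0) \<and>
       (\<forall>j<k. subspace (Vs j) \<and> Vs j \<subseteq> V) \<and>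
       (\<forall>i<k. \<forall>j<k. i \<noteq> j \<longrightarrow> (\<forall>x\<in>Vs i. \<forall>y\<in>Vs j. ip x y = 0)) \<and>
       V = span (\<Union>j<k. Vs j) \<and>
       (\<forall>\<eta>. nonzero_dual_center br \<eta> \<longrightarrow> (\<forall>j<k.
          (\<forall>x\<in>V. Jmap br V ip \<eta> (oproj ip (Vs j) x) = oproj ip (Vs j) (Jmap br V ip \<eta> x)) \<and>
          dim ((\<lambda>x. Jmap br V ip \<eta> (Jmap br V ip \<eta> (oproj ip (Vs j) x))) ` V) = 2 * r j \<and>
          (\<exists>!\<mu>::real. \<mu> \<noteq> 0 \<and> (\<exists>x\<in>V. x \<noteq> 0 \<and>
              Jmap br V ip \<eta> (Jmap br V ip \<eta> (oproj ip (Vs j) x)) = \<mu> *\<^sub>R x)))))"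

text \<open>Complexification g_C = g + i g, realised on pairs (a,b) = a + i b.\<close>
definition complexify_br :: "('g::euclidean_space \<Rightarrow> 'g \<Rightarrow> 'g) \<Rightarrow> ('g \<times> 'g) \<Rightarrow> ('g \<times> 'g) \<Rightarrow> ('g \<times> 'g)" where
  "complexify_br br p q = (br (fst p) (fst q) - br (snd p) (snd q), br (fst p) (snd q) + br (snd p) (fst q))"

definition complexify_ip :: "('g \<Rightarrow> 'g \<Rightarrow> real) \<Rightarrow> ('g \<times> 'g) \<Rightarrow> ('g \<times> 'g) \<Rightarrow> real" where
  "complexify_ip ip p q = ip (fst p) (fst q) + ip (snd p) (snd q)"

end

theory Submission
  imports Defs
begin


definition good :: "'a::euclidean_space set \<Rightarrow> ('a \<Rightarrow> 'a \<Rightarrow> real) \<Rightarrow> bool" where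
  "good V q \<longleftrightarrow> subspace V \<and> bilinear q \<and> (\<forall>x y. q x y = q y x) \<and> (\<forall>x\<in>V. x \<noteq> 0 \<longrightarrow> q x x > 0)"

definition obn :: "'a::euclidean_space set \<Rightarrow> 'a set" where
  "obn V = (SOME B. B \<subseteq> V \<and> pairwise orthogonal B \<and> (\<forall>x\<in>B. norm x = 1) \<and> independent B \<and> span B = V)"

lemma obn:
  assumes "subspace V"
  shows "obn V \<subseteq> V" "pairwise orthogonal (obn V)" "\<And>x. x \<in> obn V \<Longrightarrow> norm x = 1"
    "independent (obn V)" "span (obn V) = V" "finite (obn V)"
proof -
  have ex: "\<exists>B. B \<subseteq> V \<and> pairwise orthogonal B \<and> (\<forall>x\<in>B. norm x = 1) \<and> independent B \<and> span B = V"
    using orthonormal_basis_subspace[OF assms] by metis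
  have *: "obn V \<subseteq> V \<and> pairwise orthogonal (obn V) \<and> (\<forall>x\<in>obn V. norm x = 1) \<and> independent (obn V) \<and> span (obn V) = V"
    unfolding obn_def by (rule someI_ex[OF ex])
  then show "obn V \<subseteq> V" "pairwise orthogonal (obn V)" "\<And>x. x \<in> obn V \<Longrightarrow> norm x = 1"
    "independent (obn V)" "span (obn V) = V" by auto
  then show "finite (obn V)" using finiteI_independent by blast
qed

lemma on_inner:
  fixes B :: "'a::euclidean_space set"
  assumes "finite B" "pairwise orthogonal B" "\<And>x. x \<in> B \<Longrightarrow> norm x = 1" "b \<in> B"
  shows "(\<Sum>x\<in>B. c x *\<^sub>R x) \<bullet> b = c b"
proof -
  have "(\<Sum>x\<in>B. c x *\<^sub>R x) \<bullet> b = (\<Sum>x\<in>B. c x * (x \<bullet> b))"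
    by (simp add: inner_sum_left)
  also have "\<dots> = c b * (b \<bullet> b) + (\<Sum>x\<in>B-{b}. c x * (x \<bullet> b))"
    using assms by (simp add: sum.remove)
  also have "(\<Sum>x\<in>B-{b}. c x * (x \<bullet> b)) = 0"
    using assms(2,4) by (intro sum.neutral) (auto simp: pairwise_def orthogonal_def)
  also have "b \<bullet> b = 1" using assms(3)[OF assms(4)] by (metis power2_norm_eq_inner power_one)
  finally show ?thesis by simp
qed

definition pV :: "'a::euclidean_space set \<Rightarrow> 'a \<Rightarrow> 'a" where
  "pV V x = (\<Sum>b\<in>obn V. (x \<bullet> b) *\<^sub>R b)"

lemma pV_linear: "linear (pV V)"
  by (rule linearI) (simp_all add: pV_def inner_add_left scaleR_add_left sum.distrib scaleR_sum_right)

lemma pV_in: "subspace V \<Longrightarrow> pV V x \<in> V"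
  unfolding pV_def using obn(1)[of V]
  by (intro subspace_sum) (auto intro: subspace_scale)

lemma pV_id:
  assumes "subspace V" "x \<in> V"
  shows "pV V x = x"
proof -
  let ?d = "x - pV V x"
  have dV: "?d \<in> V" using assms pV_in subspace_diff by blast
  have "orthogonal ?d b" if "b \<in> obn V" for b
    using on_inner[OF obn(6,2,3)[OF assms(1)] that, of "\<lambda>b. x \<bullet> b"] that
    by (simp add: orthogonal_def pV_def inner_diff_left)
  then have "orthogonal ?d ?d"
    using orthogonal_to_span[of ?d "obn V" ?d] dV obn(5)[OF assms(1)] by auto
  then show ?thesis by (simp add: orthogonal_def)
qed

definition ipx :: "'a::euclidean_space set \<Rightarrow> ('a \<Rightarrow> 'a \<Rightarrow> real) \<Rightarrow> 'a \<Rightarrow> 'a \<Rightarrow> real" where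
  "ipx V ip x y = ip (pV V x) (pV V y)"

lemma ip_add:
  assumes "inner_product_on V ip" "x \<in> V" "y \<in> V" "z \<in> V"
  shows "ip (x + y) z = ip x z + ip y z"
  using assms unfolding inner_product_on_def by (metis scaleR_one mult_1)

lemma ip_scale:
  assumes "inner_product_on V ip" "x \<in> V" "z \<in> V"
  shows "ip (c *\<^sub>R x) z = c * ip x z"
proof -
  have h: "\<forall>x\<in>V. \<forall>y\<in>V. \<forall>z\<in>V. \<forall>a b. ip (a *\<^sub>R x + b *\<^sub>R y) z = a * ip x z + b * ip y z"
    using assms(1) unfolding inner_product_on_def by blast
  show ?thesis using h[rule_format, OF assms(2) assms(2) assms(3), of c 0] by simp
qed

lemma ipx_good:
  assumes "subspace V" "inner_product_on V ip"
  shows "good V (ipx V ip)" "\<And>x y. x \<in> V \<Longrightarrow> y \<in> V \<Longrightarrow> ipx V ip x y = ip x y"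
proof -
  have sym: "\<And>x y. x \<in> V \<Longrightarrow> y \<in> V \<Longrightarrow> ip x y = ip y x"
    using assms(2) unfolding inner_product_on_def by blast
  have pos: "\<And>x. x \<in> V \<Longrightarrow> x \<noteq> 0 \<Longrightarrow> ip x x > 0"
    using assms(2) unfolding inner_product_on_def by blast
  note lin = pV_linear[of V, unfolded linear_iff]
  have L: "linear (\<lambda>x. ipx V ip x y)" for y
    by (rule linearI) (simp_all add: ipx_def lin ip_add[OF assms(2)] ip_scale[OF assms(2)] pV_in[OF assms(1)] del: scaleR_scaleR)
  have L2: "linear (\<lambda>y. ipx V ip x y)" for x
  proof -
    have "(\<lambda>y. ipx V ip x y) = (\<lambda>y. ipx V ip y x)"
      by (auto simp: ipx_def sym pV_in[OF assms(1)])
    then show ?thesis using L by simp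
  qed
  show "good V (ipx V ip)"
    unfolding good_def bilinear_def
  proof (intro conjI allI ballI impI)
    show "linear (ipx V ip x)" for x using L2[of x] by simp
    show "linear (\<lambda>x. ipx V ip x y)" for y using L[of y] .
    show "ipx V ip x y = ipx V ip y x" for x y by (simp add: ipx_def sym pV_in assms(1))
    show "0 < ipx V ip x x" if "x \<in> V" "x \<noteq> 0" for x using that by (simp add: ipx_def pV_id pos assms(1))
  qed (rule assms(1))
  show "\<And>x y. x \<in> V \<Longrightarrow> y \<in> V \<Longrightarrow> ipx V ip x y = ip x y"
    by (simp add: ipx_def pV_id assms(1))
qed




lemma good_lin1: "good V q \<Longrightarrow> linear (\<lambda>x. q x y)"
  unfolding good_def bilinear_def by blast
lemma good_lin2: "good V q \<Longrightarrow> linear (\<lambda>y. q x y)"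
  unfolding good_def bilinear_def by auto

lemma good_simps:
  assumes "good V q"
  shows "q (x + y) z = q x z + q y z" "q z (x + y) = q z x + q z y"
    "q (x - y) z = q x z - q y z" "q z (x - y) = q z x - q z y"
    "q (c *\<^sub>R x) z = c * q x z" "q z (c *\<^sub>R x) = c * q z x"
    "q (- x) z = - q x z" "q z (- x) = - q z x"
    "q 0 z = 0" "q z 0 = 0"
  using assms unfolding good_def
  by (auto simp: bilinear_ladd bilinear_radd bilinear_lsub bilinear_rsub bilinear_lmul bilinear_rmul
      bilinear_lneg bilinear_rneg bilinear_lzero bilinear_rzero)

lemma good_sum_left:
  assumes "good V q" shows "q (sum f S) z = (\<Sum>i\<in>S. q (f i) z)"
  using linear_sum[OF good_lin1[OF assms, of z]] by simp

lemma good_pos: "good V q \<Longrightarrow> x \<in> V \<Longrightarrow> x \<noteq> 0 \<Longrightarrow> q x x > 0"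
  unfolding good_def by blast
lemma good_sym: "good V q \<Longrightarrow> q x y = q y x"
  unfolding good_def by blast
lemma good_sub: "good V q \<Longrightarrow> subspace V"
  unfolding good_def by blast

lemma good_zero: "good V q \<Longrightarrow> x \<in> V \<Longrightarrow> q x x = 0 \<Longrightarrow> x = 0"
  using good_pos by fastforce

lemma riesz:
  assumes g: "good V q" and lp: "linear \<phi>"
  shows "\<exists>!y. y \<in> V \<and> (\<forall>x'\<in>V. q y x' = \<phi> x')"
proof -
  have sV: "subspace V" using g good_sub by blast
  define B where "B = obn V"
  note Bp = obn[OF sV, folded B_def]
  define G where "G y = (\<Sum>b\<in>B. q y b *\<^sub>R b)" for y
  have linG: "linear G"
    by (rule linearI) (simp_all add: G_def good_simps[OF g] scaleR_add_left sum.distrib scaleR_sum_right)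
  have GV: "G ` V \<subseteq> V"
    using Bp(1) sV unfolding G_def by (auto intro!: subspace_sum subspace_scale)
  have Gb: "G y \<bullet> b = q y b" if "b \<in> B" for y b
    unfolding G_def by (rule on_inner[OF Bp(6,2,3) that])
  have zero: "y = 0" if "y \<in> V" "G y = 0" for y
  proof -
    have "q y x' = 0" if "x' \<in> span B" for x'
      using linear_eq_on_span[OF good_lin2[OF g, of y] linear_zero, of B x'] that Gb[of _ y] \<open>G y = 0\<close>
      by auto
    then have "q y y = 0" using Bp(5) \<open>y \<in> V\<close> by auto
    then show ?thesis using good_zero[OF g \<open>y \<in> V\<close>] by blast
  qed
  have inj: "inj_on G (span V)"
    unfolding span_eq_iff[of V, THEN iffD2, OF sV]
  proof (rule inj_onI)
    fix x y assume "x \<in> V" "y \<in> V" "G x = G y"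
    then have "G (x - y) = 0" using linear_diff[OF linG] by simp
    then show "x = y" using zero[of "x - y"] \<open>x \<in> V\<close> \<open>y \<in> V\<close> sV subspace_diff by fastforce
  qed
  have "dim (G ` V) = dim V" by (rule dim_image_eq[OF linG inj])
  then have GVe: "G ` V = V"
    using subspace_dim_equal[OF linear_subspace_image[OF linG sV] sV GV] by simp
  define u where "u = (\<Sum>b\<in>B. \<phi> b *\<^sub>R b)"
  have "u \<in> V" using Bp(1) sV unfolding u_def by (auto intro!: subspace_sum subspace_scale)
  then obtain y where y: "y \<in> V" "G y = u" using GVe by force
  have "q y b = \<phi> b" if "b \<in> B" for b
    using Gb[OF that, of y] on_inner[OF Bp(6,2,3) that, of \<phi>] y(2) u_def by simp
  then have ex: "\<forall>x'\<in>V. q y x' = \<phi> x'"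
    using linear_eq_on_span[OF good_lin2[OF g, of y] lp, of B] Bp(5) by auto
  show ?thesis
  proof (rule ex1I[of _ y])
    show "y \<in> V \<and> (\<forall>x'\<in>V. q y x' = \<phi> x')" using y ex by blast
    fix y' assume h: "y' \<in> V \<and> (\<forall>x'\<in>V. q y' x' = \<phi> x')"
    have d: "y' - y \<in> V" using h y sV subspace_diff by blast
    have "q y' (y' - y) = \<phi> (y' - y)" "q y (y' - y) = \<phi> (y' - y)" using h ex d by auto
    then have "q (y' - y) (y' - y) = 0" by (simp add: good_simps(3)[OF g])
    then show "y' = y" using good_zero[OF g d] by simp
  qed
qed

definition rz :: "'a set \<Rightarrow> ('a \<Rightarrow> 'a \<Rightarrow> real) \<Rightarrow> ('a \<Rightarrow> real) \<Rightarrow> 'a" where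
  "rz V q \<phi> = (THE y. y \<in> V \<and> (\<forall>x'\<in>V. q y x' = \<phi> x'))"

lemma rz_char:
  assumes "good V q" "linear \<phi>"
  shows "rz V q \<phi> \<in> V" "\<And>x'. x' \<in> V \<Longrightarrow> q (rz V q \<phi>) x' = \<phi> x'"
  using theI'[OF riesz[OF assms]] unfolding rz_def by auto

lemma rz_unique:
  assumes "good V q" "y \<in> V" "\<And>x'. x' \<in> V \<Longrightarrow> q y x' = \<phi> x'"
  shows "rz V q \<phi> = y"
  unfolding rz_def
proof (rule the_equality)
  show "y \<in> V \<and> (\<forall>x'\<in>V. q y x' = \<phi> x')" using assms by blast
  fix y' assume h: "y' \<in> V \<and> (\<forall>x'\<in>V. q y' x' = \<phi> x')"
  have sV: "subspace V" using assms(1) good_sub by blast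
  have d: "y' - y \<in> V" using h assms sV subspace_diff by blast
  have "q y' (y' - y) = \<phi> (y' - y)" "q y (y' - y) = \<phi> (y' - y)" using h assms(3) d by auto
  then have "q (y' - y) (y' - y) = 0" by (simp add: good_simps(3)[OF assms(1)])
  then show "y' = y" using good_zero[OF assms(1) d] by simp
qed

lemma rz_cong:
  assumes "\<And>x y. x \<in> V \<Longrightarrow> y \<in> V \<Longrightarrow> ip x y = q x y"
  shows "rz V ip \<phi> = rz V q \<phi>"
proof -
  have "(\<lambda>y. y \<in> V \<and> (\<forall>x'\<in>V. ip y x' = \<phi> x')) = (\<lambda>y. y \<in> V \<and> (\<forall>x'\<in>V. q y x' = \<phi> x'))"
    using assms by (auto simp: fun_eq_iff)
  then show ?thesis unfolding rz_def by simp
qed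

lemma Jmap_rz: "Jmap br V ip \<eta> x = rz V ip (\<lambda>x'. \<eta> (br x x'))"
  unfolding Jmap_def rz_def ..

lemma Jmap_cong:
  assumes "\<And>x y. x \<in> V \<Longrightarrow> y \<in> V \<Longrightarrow> ip x y = q x y"
  shows "Jmap br V ip = Jmap br V q"
  using rz_cong[OF assms] by (auto simp: fun_eq_iff Jmap_rz)

lemma oproj_self:
  assumes "good V q" "\<And>x y. x \<in> V \<Longrightarrow> y \<in> V \<Longrightarrow> ip x y = q x y" "x \<in> V"
  shows "oproj ip V x = x"
  unfolding oproj_def
proof (rule the_equality)
  have sV: "subspace V" using assms(1) good_sub by blast
  show "x \<in> V \<and> (\<forall>w\<in>V. ip (x - x) w = 0)"
    using assms sV subspace_0[OF sV] assms(2)[of 0] by (auto simp: good_simps[OF assms(1)])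
  fix y assume h: "y \<in> V \<and> (\<forall>w\<in>V. ip (x - y) w = 0)"
  have d: "x - y \<in> V" using h assms sV subspace_diff by blast
  have "q (x - y) (x - y) = 0" using h d assms(2)[OF d d] by simp
  then show "y = x" using good_zero[OF assms(1) d] by simp
qed




lemma ts_bil: "two_step br \<Longrightarrow> bilinear br"
  unfolding two_step_def lie_algebra_def by blast
lemma ts_alt: "two_step br \<Longrightarrow> br x x = 0"
  unfolding two_step_def lie_algebra_def by blast

lemma ts_anti:
  assumes "two_step br" shows "br x y = - br y x"
proof -
  have b: "bilinear br" using ts_bil[OF assms] .
  have "0 = br (x + y) (x + y)" using ts_alt[OF assms] by simp
  also have "\<dots> = br x x + br x y + br y x + br y y"
    by (simp add: bilinear_ladd[OF b] bilinear_radd[OF b])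
  finally show ?thesis using ts_alt[OF assms, of x] ts_alt[OF assms, of y]
    by (simp add: eq_neg_iff_add_eq_0 add.commute)
qed

lemma ts_center: "two_step br \<Longrightarrow> br x y \<in> center br"
  unfolding two_step_def center_def by blast

lemma ts_center_right: "two_step br \<Longrightarrow> z \<in> center br \<Longrightarrow> br x z = 0"
  using ts_anti[of br x z] unfolding center_def by auto

lemma center_subspace:
  assumes "two_step br" shows "subspace (center br)"
proof -
  have b: "bilinear br" using ts_bil[OF assms] .
  show ?thesis unfolding subspace_def center_def
    by (auto simp: bilinear_ladd[OF b] bilinear_lmul[OF b] bilinear_lzero[OF b])
qed

lemma lin_comp_br: "bilinear br \<Longrightarrow> linear \<eta> \<Longrightarrow> linear (\<lambda>x'. \<eta> (br x x'))"
  using linear_compose[of "br x" \<eta>] unfolding bilinear_def o_def by auto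

lemma J_char:
  assumes "good V q" "bilinear br" "linear \<eta>"
  shows "Jmap br V q \<eta> x \<in> V" "\<And>x'. x' \<in> V \<Longrightarrow> q (Jmap br V q \<eta> x) x' = \<eta> (br x x')"
  unfolding Jmap_rz using rz_char[OF assms(1) lin_comp_br[OF assms(2,3)]] by auto

lemma J_unique:
  assumes "good V q" "y \<in> V" "\<And>x'. x' \<in> V \<Longrightarrow> q y x' = \<eta> (br x x')"
  shows "Jmap br V q \<eta> x = y"
  unfolding Jmap_rz by (rule rz_unique[OF assms])

lemma J_linear:
  assumes g: "good V q" and b: "bilinear br" and l: "linear \<eta>"
  shows "linear (Jmap br V q \<eta>)"
proof (rule linearI)
  have sV: "subspace V" using g good_sub by blast
  note c = J_char[OF assms]
  show "Jmap br V q \<eta> (x + y) = Jmap br V q \<eta> x + Jmap br V q \<eta> y" for x y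
    by (rule J_unique[OF g]) (auto simp: c sV subspace_add good_simps[OF g] bilinear_ladd[OF b] linear_add[OF l])
  show "Jmap br V q \<eta> (r *\<^sub>R x) = r *\<^sub>R Jmap br V q \<eta> x" for r x
    by (rule J_unique[OF g]) (auto simp: c sV subspace_scale good_simps[OF g] bilinear_lmul[OF b] linear_scale[OF l])
qed

lemma J_skew:
  assumes g: "good V q" and t: "two_step br" and l: "linear \<eta>" and "x \<in> V" "y \<in> V"
  shows "q (Jmap br V q \<eta> x) y = - q x (Jmap br V q \<eta> y)"
proof -
  note c = J_char[OF g ts_bil[OF t] l]
  have "q (Jmap br V q \<eta> x) y = \<eta> (br x y)" using c assms by auto
  also have "\<dots> = - \<eta> (br y x)" using ts_anti[OF t, of x y] linear_neg[OF l] by simp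
  also have "\<eta> (br y x) = q x (Jmap br V q \<eta> y)" using c assms good_sym[OF g] by metis
  finally show ?thesis .
qed

lemma J_zero:
  assumes g: "good V q" and t: "two_step br" and l: "linear \<eta>" and z: "\<forall>w\<in>center br. \<eta> w = 0"
  shows "Jmap br V q \<eta> x = 0"
  by (rule J_unique[OF g]) (use g good_sub subspace_0 in \<open>auto simp: good_simps[OF g] z ts_center[OF t]\<close>)

lemma J_add:
  assumes g: "good V q" and b: "bilinear br" and "linear \<eta>1" "linear \<eta>2"
  shows "Jmap br V q (\<lambda>w. \<eta>1 w + \<eta>2 w) x = Jmap br V q \<eta>1 x + Jmap br V q \<eta>2 x"
  using J_char[OF g b assms(3)] J_char[OF g b assms(4)] good_sub[OF g]
  by (intro J_unique[OF g]) (auto simp: subspace_add good_simps[OF g])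

definition proj :: "('g::euclidean_space \<Rightarrow> 'g \<Rightarrow> 'g) \<Rightarrow> 'g set \<Rightarrow> 'g \<Rightarrow> 'g" where
  "proj br V x = (THE p. p \<in> V \<and> x - p \<in> center br)"

lemma proj_unique:
  assumes t: "two_step br" and c: "complement_of_center br V" and "p \<in> V" "x - p \<in> center br"
  shows "proj br V x = p"
  unfolding proj_def
proof (rule the_equality)
  show "p \<in> V \<and> x - p \<in> center br" using assms by blast
  fix p' assume h: "p' \<in> V \<and> x - p' \<in> center br"
  have sV: "subspace V" using c unfolding complement_of_center_def by blast
  have "p' - p \<in> V" using h assms sV subspace_diff by blast
  moreover have "p' - p \<in> center br"
    using subspace_diff[OF center_subspace[OF t] assms(4), of "x - p'"] h by (simp add: algebra_simps)
  ultimately have "p' - p \<in> V \<inter> center br" by blast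
  then show "p' = p" using c unfolding complement_of_center_def by auto
qed

lemma proj_props:
  assumes t: "two_step br" and c: "complement_of_center br V"
  shows "proj br V x \<in> V" "x - proj br V x \<in> center br"
proof -
  obtain v w where "v \<in> V" "w \<in> center br" "x = v + w"
    using c unfolding complement_of_center_def by blast
  then have "proj br V x = v" using proj_unique[OF t c] by auto
  then show "proj br V x \<in> V" "x - proj br V x \<in> center br" using \<open>v \<in> V\<close> \<open>w \<in> center br\<close> \<open>x = v + w\<close> by auto
qed

lemma proj_linear:
  assumes t: "two_step br" and c: "complement_of_center br V"
  shows "linear (proj br V)"
proof -
  have sV: "subspace V" using c unfolding complement_of_center_def by blast
  have sC: "subspace (center br)" using center_subspace[OF t] .
  note p = proj_props[OF t c]
  show ?thesis
  proof (rule linearI)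
    fix x y
    have "x + y - (proj br V x + proj br V y) = (x - proj br V x) + (y - proj br V y)" by simp
    also have "\<dots> \<in> center br" using p sC by (auto intro: subspace_add)
    finally show "proj br V (x + y) = proj br V x + proj br V y"
      using p sV by (intro proj_unique[OF t c]) (auto intro: subspace_add)
  next
    fix r x
    have "r *\<^sub>R x - r *\<^sub>R proj br V x = r *\<^sub>R (x - proj br V x)" by (simp add: algebra_simps)
    also have "\<dots> \<in> center br" using p sC by (auto intro: subspace_scale)
    finally show "proj br V (r *\<^sub>R x) = r *\<^sub>R proj br V x"
      using p sV by (intro proj_unique[OF t c]) (auto intro: subspace_scale)
  qed
qed




lemma br_proj:
  assumes t: "two_step br" and c: "complement_of_center br V"
  shows "br x (proj br V y) = br x y" "br (proj br V x) y = br x y"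
proof -
  have b: "bilinear br" using ts_bil[OF t] .
  note p = proj_props[OF t c]
  have "br x y = br x (proj br V y) + br x (y - proj br V y)"
    by (simp add: bilinear_rsub[OF b])
  then show "br x (proj br V y) = br x y" using ts_center_right[OF t p(2)] by simp
  have "br x y = br (proj br V x) y + br (x - proj br V x) y"
    by (simp add: bilinear_lsub[OF b])
  then show "br (proj br V x) y = br x y" using p(2)[of x] unfolding center_def by simp
qed

lemma proj_onto:
  assumes t: "two_step br" and c0: "complement_of_center br V0" and c: "complement_of_center br V"
    and "p \<in> V0"
  shows "proj br V0 (proj br V p) = p"
proof (rule proj_unique[OF t c0 assms(4)])
  have "proj br V p - p = - (p - proj br V p)" by simp
  also have "\<dots> \<in> center br" using proj_props(2)[OF t c] center_subspace[OF t] subspace_neg by blast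
  finally show "proj br V p - p \<in> center br" .
qed

lemma rank_transfer:
  assumes t: "two_step br" and c0: "complement_of_center br V0" and c: "complement_of_center br V"
    and g0: "good V0 q0" and g: "good V q" and l: "linear \<eta>"
  shows "dim (Jmap br V q \<eta> ` V) = dim (Jmap br V0 q0 \<eta> ` V0)"
proof -
  have b: "bilinear br" using ts_bil[OF t] .
  have sV0: "subspace V0" using g0 good_sub by blast
  have sV: "subspace V" using g good_sub by blast
  define J0 where "J0 = Jmap br V0 q0 \<eta>"
  define Jv where "Jv = Jmap br V q \<eta>"
  define \<pi> where "\<pi> = proj br V0"
  have lp: "linear \<pi>" unfolding \<pi>_def by (rule proj_linear[OF t c0])
  define T where "T y = rz V q (\<lambda>x'. q0 y (\<pi> x'))" for y
  have lphi: "linear (\<lambda>x'. q0 y (\<pi> x'))" for y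
    using linear_compose[OF lp good_lin2[OF g0, of y]] by (simp add: o_def)
  note Tc = rz_char[OF g lphi, folded T_def]
  note J0c = J_char[OF g0 b l, folded J0_def]
  have JT: "Jv x = T (J0 x)" for x
    unfolding Jv_def
  proof (rule J_unique[OF g])
    show "T (J0 x) \<in> V" by (rule Tc(1))
    fix x' assume "x' \<in> V"
    have "q (T (J0 x)) x' = q0 (J0 x) (\<pi> x')" using Tc(2)[OF \<open>x' \<in> V\<close>] .
    also have "\<dots> = \<eta> (br x (\<pi> x'))" using J0c(2) proj_props(1)[OF t c0] unfolding \<pi>_def by blast
    also have "\<dots> = \<eta> (br x x')" unfolding \<pi>_def br_proj(1)[OF t c0] ..
    finally show "q (T (J0 x)) x' = \<eta> (br x x')" .
  qed
  have J0p: "J0 (\<pi> x) = J0 x" for x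
    unfolding J0_def
    by (rule J_unique[OF g0]) (auto simp: J0c[unfolded J0_def] \<pi>_def br_proj[OF t c0])
  have img: "J0 ` V = J0 ` V0"
  proof
    show "J0 ` V \<subseteq> J0 ` V0"
      using J0p proj_props(1)[OF t c0] unfolding \<pi>_def by (metis image_eqI image_subsetI)
    show "J0 ` V0 \<subseteq> J0 ` V"
    proof
      fix y assume "y \<in> J0 ` V0"
      then obtain p where p: "p \<in> V0" "y = J0 p" by blast
      have "J0 (proj br V p) = J0 p" using J0p[of "proj br V p"] proj_onto[OF t c0 c p(1)] unfolding \<pi>_def by simp
      then show "y \<in> J0 ` V" using p proj_props(1)[OF t c] by (metis image_eqI)
    qed
  qed
  have linT: "linear T"
  proof (rule linearI)
    show "T (x + y) = T x + T y" for x y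
      unfolding T_def by (rule rz_unique[OF g]) (auto simp: Tc[unfolded T_def] sV subspace_add good_simps[OF g] good_simps[OF g0])
    show "T (r *\<^sub>R x) = r *\<^sub>R T x" for r x
      unfolding T_def by (rule rz_unique[OF g]) (auto simp: Tc[unfolded T_def] sV subspace_scale good_simps[OF g] good_simps[OF g0])
  qed
  have injT: "inj_on T V0"
  proof (rule inj_onI)
    fix x y assume xy: "x \<in> V0" "y \<in> V0" "T x = T y"
    have d: "x - y \<in> V0" using xy sV0 subspace_diff by blast
    have "T (x - y) = 0" using xy linear_diff[OF linT] by simp
    then have h: "q0 (x - y) (\<pi> x') = 0" if "x' \<in> V" for x'
      using Tc(2)[OF that, of "x - y"] good_simps(9)[OF g] by simp
    have "q0 (x - y) (x - y) = 0"
      using h[of "proj br V (x - y)"] proj_props(1)[OF t c] proj_onto[OF t c0 c d] unfolding \<pi>_def by simp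
    then show "x = y" using good_zero[OF g0 d] by simp
  qed
  have sub: "span (J0 ` V0) \<subseteq> V0"
    using J0c(1) sV0 by (metis image_subsetI span_minimal)
  have "Jv ` V = T ` (J0 ` V)" using JT by (auto simp: image_image)
  then have "Jv ` V = T ` (J0 ` V0)" using img by simp
  then have "dim (Jv ` V) = dim (J0 ` V0)"
    using dim_image_eq[OF linT inj_on_subset[OF injT sub]] by simp
  then show ?thesis unfolding Jv_def J0_def .
qed




definition skewop :: "'a::euclidean_space set \<Rightarrow> ('a \<Rightarrow> 'a \<Rightarrow> real) \<Rightarrow> ('a \<Rightarrow> 'a) \<Rightarrow> bool" where
  "skewop V q J \<longleftrightarrow> good V q \<and> linear J \<and> (\<forall>x. J x \<in> V) \<and> (\<forall>x\<in>V. \<forall>y\<in>V. q (J x) y = - q x (J y))"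

lemma sk_self:
  assumes s: "skewop V q J" and x: "x \<in> V" shows "q (J x) x = 0"
proof -
  have g: "good V q" using s unfolding skewop_def by blast
  have "q (J x) x = - q x (J x)" using s x unfolding skewop_def by blast
  also have "q x (J x) = q (J x) x" using good_sym[OF g] .
  finally show ?thesis by simp
qed

lemma sk_img_nz:
  assumes s: "skewop V q J" and "x \<in> V" "J x \<noteq> 0" shows "J (J x) \<noteq> 0"
proof
  assume h: "J (J x) = 0"
  have g: "good V q" and JV: "\<And>y. J y \<in> V" using s unfolding skewop_def by auto
  have "q (J x) (J x) = - q x (J (J x))" using s assms(2) JV unfolding skewop_def by blast
  then have "q (J x) (J x) = 0" using h good_simps(10)[OF g] by simp
  then show False using good_zero[OF g JV] assms(3) by blast
qed

lemma span2: "x \<in> span {a, b} \<Longrightarrow> \<exists>k1 k2. x = k1 *\<^sub>R a + k2 *\<^sub>R b"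
  by (auto simp: span_breakdown_eq span_singleton) (metis add.commute diff_add_cancel)

lemma span4: "x \<in> span {a, b, c, d} \<Longrightarrow> \<exists>k1 k2 k3 k4. x = k1 *\<^sub>R a + k2 *\<^sub>R b + k3 *\<^sub>R c + k4 *\<^sub>R d"
proof -
  assume "x \<in> span {a, b, c, d}"
  then obtain k1 where "x - k1 *\<^sub>R a \<in> span {b, c, d}" by (auto simp: span_breakdown_eq)
  then obtain k2 where "x - k1 *\<^sub>R a - k2 *\<^sub>R b \<in> span {c, d}" by (auto simp: span_breakdown_eq)
  then obtain k3 where "x - k1 *\<^sub>R a - k2 *\<^sub>R b - k3 *\<^sub>R c \<in> span {d}" by (auto simp: span_breakdown_eq)
  then obtain k4 where "x - k1 *\<^sub>R a - k2 *\<^sub>R b - k3 *\<^sub>R c = k4 *\<^sub>R d" by (auto simp: span_singleton)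
  then have "x = k1 *\<^sub>R a + k2 *\<^sub>R b + k3 *\<^sub>R c + k4 *\<^sub>R d" by (simp add: algebra_simps)
  then show ?thesis by blast
qed

lemma orth_indep:
  assumes g: "good V q" and "finite F" "F \<subseteq> V" "0 \<notin> F" "\<And>f h. f \<in> F \<Longrightarrow> h \<in> F \<Longrightarrow> f \<noteq> h \<Longrightarrow> q f h = 0"
  shows "independent F"
  unfolding independent_explicit
proof (intro conjI allI impI ballI)
  show "finite F" by fact
  fix c v assume h: "(\<Sum>v\<in>F. c v *\<^sub>R v) = 0" and v: "v \<in> F"
  have "0 = q (\<Sum>v\<in>F. c v *\<^sub>R v) v" using h good_simps(9)[OF g] by simp
  also have "\<dots> = (\<Sum>w\<in>F. c w * q w v)" by (simp add: good_sum_left[OF g] good_simps[OF g])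
  also have "\<dots> = c v * q v v + (\<Sum>w\<in>F-{v}. c w * q w v)" using assms(2) v by (simp add: sum.remove)
  also have "(\<Sum>w\<in>F-{v}. c w * q w v) = 0" using assms(5) v by (intro sum.neutral) auto
  finally have "c v * q v v = 0" by simp
  moreover have "q v v > 0" using good_pos[OF g] assms(3,4) v by blast
  ultimately show "c v = 0" by simp
qed

lemma dim_pos_ex:
  fixes J :: "'a::euclidean_space \<Rightarrow> 'b::euclidean_space"
  assumes "linear J" "dim (J ` V) > 0" shows "\<exists>x\<in>V. J x \<noteq> 0"
proof (rule ccontr)
  assume "\<not> ?thesis"
  then have "J ` V \<subseteq> {0}" by auto
  then have "dim (J ` V) = 0" using dim_eq_0 by blast
  then show False using assms(2) by linarith
qed

lemma frame2_basis:
  assumes s: "skewop V q J" and d: "dim (J ` V) = 2"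
  shows "\<exists>u. u \<in> V \<and> u \<noteq> 0 \<and> J u \<noteq> 0 \<and> u \<in> J ` V \<and> q u (J u) = 0 \<and> J ` V \<subseteq> span {u, J u}"
proof -
  have g: "good V q" and lJ: "linear J" and JV: "\<And>y. J y \<in> V" using s unfolding skewop_def by auto
  have sV: "subspace V" using g good_sub by blast
  obtain x where x: "x \<in> V" "J x \<noteq> 0" using dim_pos_ex[OF lJ, of V] d by auto
  define u where "u = J x"
  define f where "f = J u"
  have u0: "u \<noteq> 0" using x u_def by simp
  have uV: "u \<in> V" "f \<in> V" using JV u_def f_def by auto
  have f0: "f \<noteq> 0" using sk_img_nz[OF s x] u_def f_def by simp
  have uW: "u \<in> J ` V" "f \<in> J ` V" using x JV u_def f_def by auto
  have quf2: "q f u = 0" unfolding f_def using sk_self[OF s uV(1)] .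
  have quf: "q u f = 0" "q f u = 0" using quf2 good_sym[OF g, of u f] by auto
  have uf: "u \<noteq> f" using quf good_pos[OF g uV(1) u0] by auto
  have ind: "independent {u, f}"
  proof (rule orth_indep[OF g])
    show "finite {u, f}" by simp
    show "{u, f} \<subseteq> V" using uV by simp
    show "0 \<notin> {u, f}" using u0 f0 by simp
    show "\<And>a b. a \<in> {u, f} \<Longrightarrow> b \<in> {u, f} \<Longrightarrow> a \<noteq> b \<Longrightarrow> q a b = 0" using quf by blast
  qed
  have c2: "card {u, f} = dim (J ` V)" using uf d by simp
  have W: "J ` V \<subseteq> span {u, f}"
    using card_eq_dim[of "{u,f}" "J ` V"] uW c2 ind by simp
  show ?thesis using uV u0 f0 uW quf W unfolding f_def by blast
qed

lemma frame2:
  assumes s: "skewop V q J" and d: "dim (J ` V) = 2"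
  shows "\<exists>a. a \<noteq> 0 \<and> (\<forall>w\<in>J ` V. J (J w) = a *\<^sub>R w)"
proof -
  have g: "good V q" and lJ: "linear J" and JV: "\<And>y. J y \<in> V" using s unfolding skewop_def by auto
  obtain u where u: "u \<in> V" "u \<noteq> 0" "J u \<noteq> 0" "u \<in> J ` V" "q u (J u) = 0" "J ` V \<subseteq> span {u, J u}"
    using frame2_basis[OF s d] by blast
  define f where "f = J u"
  have uV: "u \<in> V" "f \<in> V" using JV u f_def by auto
  have f0: "f \<noteq> 0" using u f_def by simp
  have Jf0: "J f \<noteq> 0" using sk_img_nz[OF s uV(1)] f0 f_def by simp
  have quf: "q u f = 0" "q f u = 0" using u(5) good_sym[OF g, of u f] f_def by auto
  have W: "J ` V \<subseteq> span {u, f}" using u(6) f_def by simp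
  have "J f \<in> J ` V" using uV(2) by (rule imageI)
  then have "J f \<in> span {u, f}" using W by blast
  then obtain k1 k2 where k: "J f = k1 *\<^sub>R u + k2 *\<^sub>R f" using span2 by blast
  have "0 = q (J f) f" using sk_self[OF s uV(2)] by simp
  also have "\<dots> = k2 * q f f" using k quf by (simp add: good_simps[OF g])
  finally have "k2 = 0" using good_pos[OF g uV(2) f0] by simp
  then have Jf: "J (J u) = k1 *\<^sub>R u" using k f_def by simp
  have Jf2: "J (J f) = k1 *\<^sub>R f" using Jf f_def linear_scale[OF lJ] by simp
  have "k1 \<noteq> 0" using Jf0 Jf unfolding f_def by auto
  moreover have "J (J w) = k1 *\<^sub>R w" if "w \<in> J ` V" for w
  proof -
    have "w \<in> span {u, f}" using W that by blast
    then obtain c1 c2 where "w = c1 *\<^sub>R u + c2 *\<^sub>R f" using span2 by blast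
    then show ?thesis using Jf Jf2 f_def by (simp add: linear_add[OF lJ] linear_scale[OF lJ] algebra_simps)
  qed
  ultimately show ?thesis by blast
qed

lemma scalar_final:
  assumes s: "skewop V q J" and a: "a \<noteq> 0" and h: "\<forall>w\<in>J ` V. J (J w) = a *\<^sub>R w"
    and ne: "\<exists>x\<in>V. J x \<noteq> 0"
  shows "(\<lambda>x. J (J x)) ` V = J ` V" "\<exists>!\<mu>. \<mu> \<noteq> 0 \<and> (\<exists>x\<in>V. x \<noteq> 0 \<and> J (J x) = \<mu> *\<^sub>R x)"
proof -
  have g: "good V q" and lJ: "linear J" and JV: "\<And>y. J y \<in> V" using s unfolding skewop_def by auto
  have sV: "subspace V" using g good_sub by blast
  show "(\<lambda>x. J (J x)) ` V = J ` V"
  proof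
    show "(\<lambda>x. J (J x)) ` V \<subseteq> J ` V" using JV by auto
    show "J ` V \<subseteq> (\<lambda>x. J (J x)) ` V"
    proof
      fix w assume w: "w \<in> J ` V"
      have "J (J w) = a *\<^sub>R w" using h w by blast
      then have "J (J ((1/a) *\<^sub>R w)) = w" using a by (simp add: linear_scale[OF lJ])
      moreover have "(1/a) *\<^sub>R w \<in> V" using w JV sV subspace_scale by blast
      ultimately show "w \<in> (\<lambda>x. J (J x)) ` V" by (metis image_eqI)
    qed
  qed
  obtain x where x: "x \<in> V" "J x \<noteq> 0" using ne by blast
  show "\<exists>!\<mu>. \<mu> \<noteq> 0 \<and> (\<exists>x\<in>V. x \<noteq> 0 \<and> J (J x) = \<mu> *\<^sub>R x)"
  proof (rule ex1I[of _ a])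
    show "a \<noteq> 0 \<and> (\<exists>x\<in>V. x \<noteq> 0 \<and> J (J x) = a *\<^sub>R x)"
      using a x h JV by blast
    fix \<mu> assume m: "\<mu> \<noteq> 0 \<and> (\<exists>x\<in>V. x \<noteq> 0 \<and> J (J x) = \<mu> *\<^sub>R x)"
    then obtain y where y: "y \<in> V" "y \<noteq> 0" "J (J y) = \<mu> *\<^sub>R y" by blast
    have "y = J ((1/\<mu>) *\<^sub>R J y)" using y m by (simp add: linear_scale[OF lJ])
    moreover have "(1/\<mu>) *\<^sub>R J y \<in> V" using JV sV subspace_scale by blast
    ultimately have "y \<in> J ` V" by (metis image_eqI)
    then have "J (J y) = a *\<^sub>R y" using h by blast
    then have "\<mu> *\<^sub>R y = a *\<^sub>R y" using y by simp
    then show "\<mu> = a" using y(2) by simp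
  qed
qed

lemma assA_intro:
  assumes g: "good V q" and ipq: "\<And>x y. x \<in> V \<Longrightarrow> y \<in> V \<Longrightarrow> ip x y = q x y" and r: "r > 0"
    and H: "\<And>\<eta>. nonzero_dual_center br \<eta> \<Longrightarrow> skewop V q (Jmap br V q \<eta>) \<and>
        dim (Jmap br V q \<eta> ` V) = 2 * r \<and>
        (\<exists>a. a \<noteq> 0 \<and> (\<forall>w\<in>Jmap br V q \<eta> ` V. Jmap br V q \<eta> (Jmap br V q \<eta> w) = a *\<^sub>R w))"
  shows "assumptionA br V ip"
proof -
  have sV: "subspace V" using g good_sub by blast
  have JC: "Jmap br V ip = Jmap br V q" using Jmap_cong[OF ipq] .
  have op: "\<And>x. x \<in> V \<Longrightarrow> oproj ip V x = x" using oproj_self[OF g ipq] by blast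
  show ?thesis
    unfolding assumptionA_def
  proof (intro exI[of _ "1::nat"] exI[of _ "\<lambda>_. V"] exI[of _ "\<lambda>_::nat. r"] conjI allI impI)
    fix \<eta> j assume n: "nonzero_dual_center br \<eta>" and j: "j < (1::nat)"
    define J where "J = Jmap br V q \<eta>"
    obtain a where s: "skewop V q J" and d: "dim (J ` V) = 2 * r" and a: "a \<noteq> 0"
      and ha: "\<forall>w\<in>J ` V. J (J w) = a *\<^sub>R w"
      using H[OF n] unfolding J_def by blast
    have ne: "\<exists>x\<in>V. J x \<noteq> 0" using dim_pos_ex[of J V] s d r unfolding skewop_def by auto
    note sf = scalar_final[OF s a ha ne]
    have JV: "\<And>y. J y \<in> V" using s unfolding skewop_def by auto
    have im: "(\<lambda>x. Jmap br V ip \<eta> (Jmap br V ip \<eta> (oproj ip V x))) ` V = (\<lambda>x. J (J x)) ` V"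
      by (rule image_cong) (auto simp: JC J_def op)
    show "\<forall>x\<in>V. Jmap br V ip \<eta> (oproj ip V x) = oproj ip V (Jmap br V ip \<eta> x)"
      using op JV by (simp add: JC J_def[symmetric])
    show "dim ((\<lambda>x. Jmap br V ip \<eta> (Jmap br V ip \<eta> (oproj ip V x))) ` V) = 2 * r"
      using im sf(1) d by simp
    show "\<exists>!\<mu>. \<mu> \<noteq> 0 \<and> (\<exists>x\<in>V. x \<noteq> 0 \<and> Jmap br V ip \<eta> (Jmap br V ip \<eta> (oproj ip V x)) = \<mu> *\<^sub>R x)"
      using sf(2) op by (simp add: JC J_def[symmetric] cong: rev_conj_cong bex_cong)
  qed (use sV r in \<open>auto simp: span_eq_iff[THEN iffD2, OF sV]\<close>)
qed




lemma J_skewop: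
  assumes g: "good V q" and t: "two_step br" and l: "linear \<eta>"
  shows "skewop V q (Jmap br V q \<eta>)"
  unfolding skewop_def
  using g J_linear[OF g ts_bil[OF t] l] J_char(1)[OF g ts_bil[OF t] l] J_skew[OF g t l] by blast

lemma part12:
  assumes t: "two_step br" and c0: "complement_of_center br V0" and i0: "inner_product_on V0 ip0"
    and H: "\<forall>\<eta>. nonzero_dual_center br \<eta> \<longrightarrow> dim (Jmap br V0 ip0 \<eta> ` V0) = 2"
    and c: "complement_of_center br V" and i: "inner_product_on V ip"
  shows "assumptionA br V ip"
proof -
  have sV0: "subspace V0" using c0 unfolding complement_of_center_def by blast
  have sV: "subspace V" using c unfolding complement_of_center_def by blast
  note g0 = ipx_good[OF sV0 i0]
  note g = ipx_good[OF sV i]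
  show ?thesis
  proof (rule assA_intro[OF g(1) g(2)[symmetric], where r="1::nat"])
    fix \<eta> assume n: "nonzero_dual_center br \<eta>"
    have l: "linear \<eta>" using n unfolding nonzero_dual_center_def by blast
    define J where "J = Jmap br V (ipx V ip) \<eta>"
    have s: "skewop V (ipx V ip) J" unfolding J_def by (rule J_skewop[OF g(1) t l])
    have "dim (J ` V) = dim (Jmap br V0 (ipx V0 ip0) \<eta> ` V0)"
      unfolding J_def by (rule rank_transfer[OF t c0 c g0(1) g(1) l])
    also have "Jmap br V0 (ipx V0 ip0) = Jmap br V0 ip0" by (rule Jmap_cong[symmetric]) (simp add: g0(2))
    finally have d: "dim (J ` V) = 2" using H n by simp
    show "skewop V (ipx V ip) J \<and> dim (J ` V) = 2 * 1 \<and> (\<exists>a. a \<noteq> 0 \<and> (\<forall>w\<in>J ` V. J (J w) = a *\<^sub>R w))"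
      using s d frame2[OF s d] by simp
  qed (simp_all add: zero_less_one)
qed

lemma pluecker2:
  assumes s: "skewop V q J" and d: "dim (J ` V) = 2" and x: "x1 \<in> V" "x2 \<in> V" "x3 \<in> V"
  shows "q (J x1) x2 *\<^sub>R J x3 - q (J x1) x3 *\<^sub>R J x2 + q (J x2) x3 *\<^sub>R J x1 = 0"
proof -
  have g: "good V q" and lJ: "linear J" and JV: "\<And>y. J y \<in> V"
    and sk: "\<And>x y. x \<in> V \<Longrightarrow> y \<in> V \<Longrightarrow> q (J x) y = - q x (J y)" using s unfolding skewop_def by auto
  obtain u where u: "u \<in> V" "u \<noteq> 0" "J u \<noteq> 0" "u \<in> J ` V" "q u (J u) = 0" "J ` V \<subseteq> span {u, J u}"
    using frame2_basis[OF s d] by blast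
  obtain a where a: "a \<noteq> 0" "\<forall>w\<in>J ` V. J (J w) = a *\<^sub>R w" using frame2[OF s d] by blast
  define f where "f = J u"
  have fV: "f \<in> V" using JV f_def by simp
  have Jf: "J f = a *\<^sub>R u" using a(2) u(4) unfolding f_def by blast
  have quf: "q u f = 0" "q f u = 0" using u(5) good_sym[OF g, of u f] f_def by auto
  define c where "c = q u u"
  have qff: "q f f = - a * c"
  proof -
    have "q f f = - q u (J f)" unfolding f_def using sk[OF u(1) JV[of u]] .
    then show ?thesis using Jf by (simp add: good_simps[OF g] c_def)
  qed
  have rep: "\<exists>l m. J x = l *\<^sub>R u + m *\<^sub>R f" if "x \<in> V" for x
  proof -
    have "J x \<in> J ` V" using that by (rule imageI)
    then have "J x \<in> span {u, f}" using u(6) f_def by blast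
    then show ?thesis using span2 by blast
  qed
  have key: "q (J x) y = c * (l * m' - m * l')"
    if "x \<in> V" "y \<in> V" "J x = l *\<^sub>R u + m *\<^sub>R f" "J y = l' *\<^sub>R u + m' *\<^sub>R f" for x y l m l' m'
  proof -
    have qfy: "q f y = - l' * c"
    proof -
      have "q f y = - q u (J y)" unfolding f_def using sk[OF u(1) that(2)] .
      then show ?thesis using that(4) quf by (simp add: good_simps[OF g] c_def)
    qed
    have quy: "q u y = m' * c"
    proof -
      have "a * q u y = q (J f) y" using Jf by (simp add: good_simps[OF g])
      also have "\<dots> = - q f (J y)" using sk[OF fV that(2)] .
      also have "\<dots> = a * (m' * c)" using that(4) quf qff by (simp add: good_simps[OF g])
      finally show ?thesis using a(1) by simp
    qed
    have "q (J x) y = l * q u y + m * q f y" using that(3) by (simp add: good_simps[OF g])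
    then show ?thesis using qfy quy by (simp add: algebra_simps)
  qed
  obtain l1 m1 where r1: "J x1 = l1 *\<^sub>R u + m1 *\<^sub>R f" using rep x by blast
  obtain l2 m2 where r2: "J x2 = l2 *\<^sub>R u + m2 *\<^sub>R f" using rep x by blast
  obtain l3 m3 where r3: "J x3 = l3 *\<^sub>R u + m3 *\<^sub>R f" using rep x by blast
  have "q (J x1) x2 *\<^sub>R J x3 - q (J x1) x3 *\<^sub>R J x2 + q (J x2) x3 *\<^sub>R J x1
     = (c * (l1 * m2 - m1 * l2)) *\<^sub>R (l3 *\<^sub>R u + m3 *\<^sub>R f) - (c * (l1 * m3 - m1 * l3)) *\<^sub>R (l2 *\<^sub>R u + m2 *\<^sub>R f)
       + (c * (l2 * m3 - m2 * l3)) *\<^sub>R (l1 *\<^sub>R u + m1 *\<^sub>R f)"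
    using key[OF x(1) x(2) r1 r2] key[OF x(1) x(3) r1 r3] key[OF x(2) x(3) r2 r3] r1 r2 r3 by simp
  also have "\<dots> = 0"
  proof -
    have "\<forall>z. ((c * (l1 * m2 - m1 * l2)) *\<^sub>R (l3 *\<^sub>R u + m3 *\<^sub>R f) - (c * (l1 * m3 - m1 * l3)) *\<^sub>R (l2 *\<^sub>R u + m2 *\<^sub>R f)
       + (c * (l2 * m3 - m2 * l3)) *\<^sub>R (l1 *\<^sub>R u + m1 *\<^sub>R f)) \<bullet> z = 0"
      by (simp add: inner_add_left inner_diff_left algebra_simps)
    then show ?thesis by (metis inner_eq_zero_iff)
  qed
  finally show ?thesis .
qed




lemma frame4:
  assumes s: "skewop V q J" and lI: "linear I" and IV: "\<And>x. x \<in> V \<Longrightarrow> I x \<in> V"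
    and II: "\<And>x. I (I x) = - x" and Isk: "\<And>x y. x \<in> V \<Longrightarrow> y \<in> V \<Longrightarrow> q (I x) y = - q x (I y)"
    and JI: "\<And>x. J (I x) = - I (J x)"
    and ne: "\<exists>x\<in>V. J x \<noteq> 0" and up: "dim (J ` V) \<le> 4"
  shows "dim (J ` V) = 4 \<and> (\<exists>a. a \<noteq> 0 \<and> (\<forall>w\<in>J ` V. J (J w) = a *\<^sub>R w))"
proof -
  have g: "good V q" and lJ: "linear J" and JV: "\<And>y. J y \<in> V"
    and sk: "\<And>x y. x \<in> V \<Longrightarrow> y \<in> V \<Longrightarrow> q (J x) y = - q x (J y)" using s unfolding skewop_def by auto
  have sV: "subspace V" using g good_sub by blast
  have sym: "\<And>x y. q x y = q y x" using good_sym[OF g] .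
  have F1: "q (I y) y = 0" if "y \<in> V" for y
  proof -
    have "q (I y) y = - q y (I y)" using Isk[OF that that] .
    then show ?thesis using sym[of y "I y"] by simp
  qed
  have F2: "q (J y) (I y) = 0" if "y \<in> V" for y
  proof -
    have "q (J y) (I y) = - q y (J (I y))" using sk[OF that IV[OF that]] .
    also have "\<dots> = q y (I (J y))" using JI[of y] good_simps(8)[OF g] by simp
    also have "\<dots> = - q (I y) (J y)" using Isk[OF that JV[of y]] by simp
    finally show ?thesis using sym[of "J y" "I y"] by simp
  qed
  have F3: "q (I (J y)) y = 0" if "y \<in> V" for y
    using Isk[OF JV[of y] that] F2[OF that] by simp
  have Iiso: "q (I x) (I y) = q x y" if "x \<in> V" "y \<in> V" for x y
    using Isk[OF that(1) IV[OF that(2)]] II[of y] good_simps(8)[OF g] by simp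
  have JJI: "J (J (I y)) = I (J (J y))" for y
    using JI linear_neg[OF lJ] by simp
  obtain x where x: "x \<in> V" "J x \<noteq> 0" using ne by blast
  define u where "u = J x"
  have uV: "u \<in> V" using JV u_def by simp
  have u0: "u \<noteq> 0" using x u_def by simp
  have Ju0: "J u \<noteq> 0" using sk_img_nz[OF s x] u_def by simp
  have JJu0: "J (J u) \<noteq> 0" using sk_img_nz[OF s uV Ju0] .
  have Iu0: "I u \<noteq> 0" using II[of u] u0 by (metis linear_0[OF lI] neg_0_equal_iff_equal)
  have IJu0: "I (J u) \<noteq> 0" using II[of "J u"] Ju0 by (metis linear_0[OF lI] neg_0_equal_iff_equal)
  have inV: "u \<in> V" "I u \<in> V" "J u \<in> V" "I (J u) \<in> V" using uV IV JV by auto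
  have inW: "u \<in> J ` V" "I u \<in> J ` V" "J u \<in> J ` V" "I (J u) \<in> J ` V"
  proof -
    show "u \<in> J ` V" unfolding u_def using x(1) by (rule imageI)
    have "I u = J (- I x)" unfolding u_def using JI[of x] linear_neg[OF lJ] by simp
    moreover have "- I x \<in> V" using IV[OF x(1)] sV subspace_neg by blast
    ultimately show "I u \<in> J ` V" by (metis image_eqI)
    show "J u \<in> J ` V" using uV by (rule imageI)
    have "I (J u) = J (- I u)" using JI[of u] linear_neg[OF lJ] by simp
    moreover have "- I u \<in> V" using inV(2) sV subspace_neg by blast
    ultimately show "I (J u) \<in> J ` V" by (metis image_eqI)
  qed
  have o12: "q u (I u) = 0" using F1[OF uV] sym by metis
  have o13: "q u (J u) = 0" using sk_self[OF s uV] sym by metis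
  have o14: "q u (I (J u)) = 0" using F3[OF uV] sym by metis
  have o23: "q (I u) (J u) = 0" using F2[OF uV] sym by metis
  have o24: "q (I u) (I (J u)) = 0" using Iiso[OF uV inV(3)] o13 by simp
  have o34: "q (J u) (I (J u)) = 0" using F1[OF inV(3)] sym by metis
  note orth = o12 o13 o14 o23 o24 o34 o12[unfolded sym[of u]] o13[unfolded sym[of u]]
    o14[unfolded sym[of u]] o23[unfolded sym[of "I u"]] o24[unfolded sym[of "I u"]] o34[unfolded sym[of "J u"]]
  have p1: "q u u > 0" using good_pos[OF g uV u0] .
  have p2: "q (I u) (I u) > 0" using good_pos[OF g inV(2) Iu0] .
  have p3: "q (J u) (J u) > 0" using good_pos[OF g inV(3) Ju0] .
  have p4: "q (I (J u)) (I (J u)) > 0" using good_pos[OF g inV(4) IJu0] .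
  have d12: "u \<noteq> I u" using o12 p1 by auto
  have d13: "u \<noteq> J u" using o13 p1 by auto
  have d14: "u \<noteq> I (J u)" using o14 p1 by auto
  have d23: "I u \<noteq> J u" using o23 p2 by auto
  have d24: "I u \<noteq> I (J u)" using o24 p2 by auto
  have d34: "J u \<noteq> I (J u)" using o34 p3 by auto
  define F where "F = {u, I u, J u, I (J u)}"
  have cF: "card F = 4" unfolding F_def using d12 d13 d14 d23 d24 d34 by simp
  have indF: "independent F"
  proof (rule orth_indep[OF g])
    show "finite F" unfolding F_def by simp
    show "F \<subseteq> V" unfolding F_def using inV by simp
    show "0 \<notin> F" unfolding F_def using u0 Iu0 Ju0 IJu0 by auto
    show "\<And>a b. a \<in> F \<Longrightarrow> b \<in> F \<Longrightarrow> a \<noteq> b \<Longrightarrow> q a b = 0"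
      unfolding F_def using orth by auto
  qed
  have FW: "F \<subseteq> J ` V" unfolding F_def using inW by simp
  have "card F \<le> dim (J ` V)" using independent_card_le_dim[OF FW indF] .
  then have d: "dim (J ` V) = 4" using cF up by simp
  have W: "J ` V \<subseteq> span F"
    using card_eq_dim[of F "J ` V"] FW cF d indF unfolding F_def by simp
  have "J (J u) \<in> J ` V" using inV(3) by (rule imageI)
  then have "J (J u) \<in> span F" using W by blast
  then obtain k1 k2 k3 k4 where k: "J (J u) = k1 *\<^sub>R u + k2 *\<^sub>R I u + k3 *\<^sub>R J u + k4 *\<^sub>R I (J u)"
    unfolding F_def using span4 by blast
  have c2: "q (J (J u)) (I u) = 0"
  proof -
    have "q (J (J u)) (I u) = - q (J u) (J (I u))" using sk[OF inV(3) inV(2)] .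
    also have "\<dots> = q (J u) (I (J u))" using JI[of u] good_simps(8)[OF g] by simp
    finally show ?thesis using o34 by simp
  qed
  have c3: "q (J (J u)) (J u) = 0" using sk_self[OF s inV(3)] .
  have c4: "q (J (J u)) (I (J u)) = 0" using F2[OF inV(3)] .
  have "k2 * q (I u) (I u) = 0" using c2 k orth by (simp add: good_simps[OF g])
  then have k2: "k2 = 0" using p2 by simp
  have "k3 * q (J u) (J u) = 0" using c3 k orth by (simp add: good_simps[OF g])
  then have k3: "k3 = 0" using p3 by simp
  have "k4 * q (I (J u)) (I (J u)) = 0" using c4 k orth by (simp add: good_simps[OF g])
  then have k4: "k4 = 0" using p4 by simp
  have e1: "J (J u) = k1 *\<^sub>R u" using k k2 k3 k4 by simp
  have e2: "J (J (I u)) = k1 *\<^sub>R I u" using JJI[of u] e1 linear_scale[OF lI] by simp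
  have e3: "J (J (J u)) = k1 *\<^sub>R J u" using e1 linear_scale[OF lJ] by simp
  have e4: "J (J (I (J u))) = k1 *\<^sub>R I (J u)" using JJI[of "J u"] e3 linear_scale[OF lI] by simp
  have "k1 \<noteq> 0" using e1 JJu0 by auto
  moreover have "J (J w) = k1 *\<^sub>R w" if "w \<in> J ` V" for w
  proof -
    have "w \<in> span F" using W that by blast
    then obtain c1 c2 c3 c4 where "w = c1 *\<^sub>R u + c2 *\<^sub>R I u + c3 *\<^sub>R J u + c4 *\<^sub>R I (J u)"
      unfolding F_def using span4 by blast
    then show ?thesis using e1 e2 e3 e4
      by (simp add: linear_add[OF lJ] linear_scale[OF lJ] algebra_simps)
  qed
  ultimately show ?thesis using d by blast
qed




lemma goodC:
  assumes g: "good V q"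
  shows "good (V \<times> V) (complexify_ip q)"
proof -
  have sV: "subspace V" using g good_sub by blast
  have l1: "linear (\<lambda>x. complexify_ip q x y)" for y
    by (rule linearI) (simp_all add: complexify_ip_def good_simps[OF g] algebra_simps)
  have l2: "linear (\<lambda>y. complexify_ip q x y)" for x
    by (rule linearI) (simp_all add: complexify_ip_def good_simps[OF g] algebra_simps)
  have nn: "x \<in> V \<Longrightarrow> q x x \<ge> 0" for x
    using good_pos[OF g, of x] good_simps(9)[OF g] by (cases "x = 0") auto
  show ?thesis unfolding good_def bilinear_def
  proof (intro conjI allI ballI impI)
    show "subspace (V \<times> V)" using subspace_Times[OF sV sV] .
    show "linear (complexify_ip q x)" for x using l2[of x] by simp
    show "linear (\<lambda>x. complexify_ip q x y)" for y using l1 .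
    show "complexify_ip q x y = complexify_ip q y x" for x y
      by (simp add: complexify_ip_def good_sym[OF g])
    fix p assume p: "p \<in> V \<times> V" "p \<noteq> 0"
    then have "fst p \<noteq> 0 \<or> snd p \<noteq> 0" by (cases p) (auto simp: zero_prod_def)
    then show "0 < complexify_ip q p p"
      using p good_pos[OF g] nn unfolding complexify_ip_def
      by (cases p) (auto simp: add_pos_nonneg add_nonneg_pos)
  qed
qed

definition Iop :: "'g::euclidean_space \<times> 'g \<Rightarrow> 'g \<times> 'g" where
  "Iop p = (- snd p, fst p)"

lemma Iop_linear: "linear Iop"
  by (rule linearI) (auto simp: Iop_def)

lemma center_C:
  assumes t: "two_step br" and w: "w \<in> center (complexify_br br)"
  shows "fst w \<in> center br" "snd w \<in> center br"
proof -
  have b: "bilinear br" using ts_bil[OF t] .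
  have "complexify_br br w (c, 0) = 0" for c using w unfolding center_def by blast
  then have "br (fst w) c = 0 \<and> br (snd w) c = 0" for c
    by (simp add: complexify_br_def bilinear_rzero[OF b] zero_prod_def)
  then show "fst w \<in> center br" "snd w \<in> center br" unfolding center_def by auto
qed

lemma eta_split:
  assumes l: "linear \<eta>"
  shows "\<eta> (u, w) = \<eta> (u, 0) + \<eta> (0, w)"
  using linear_add[OF l, of "(u, 0)" "(0, w)"] by simp

lemma eta_parts_linear:
  assumes l: "linear \<eta>"
  shows "linear (\<lambda>a. \<eta> (a, 0))" "linear (\<lambda>b. \<eta> (0, b))"
  using l by (auto simp: linear_iff linear_add[OF l, symmetric] linear_scale[OF l, symmetric])

lemma JC_form:
  assumes t: "two_step br" and g0: "good V0 q0" and l: "linear \<eta>"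
  shows "Jmap (complexify_br br) (V0 \<times> V0) (complexify_ip q0) \<eta> p =
    (Jmap br V0 q0 (\<lambda>a. \<eta> (a, 0)) (fst p) + Jmap br V0 q0 (\<lambda>b. \<eta> (0, b)) (snd p),
     Jmap br V0 q0 (\<lambda>b. \<eta> (0, b)) (fst p) - Jmap br V0 q0 (\<lambda>a. \<eta> (a, 0)) (snd p))"
proof -
  have b: "bilinear br" using ts_bil[OF t] .
  have sV: "subspace V0" using g0 good_sub by blast
  define \<eta>1 where "\<eta>1 = (\<lambda>a. \<eta> (a, 0))"
  define \<eta>2 where "\<eta>2 = (\<lambda>b. \<eta> (0, b))"
  have l1: "linear \<eta>1" "linear \<eta>2" using eta_parts_linear[OF l] unfolding \<eta>1_def \<eta>2_def by auto
  note c1 = J_char[OF g0 b l1(1)] and c2 = J_char[OF g0 b l1(2)]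
  define J1 where "J1 = Jmap br V0 q0 \<eta>1"
  define J2 where "J2 = Jmap br V0 q0 \<eta>2"
  have "Jmap (complexify_br br) (V0 \<times> V0) (complexify_ip q0) \<eta> p =
    (J1 (fst p) + J2 (snd p), J2 (fst p) - J1 (snd p))"
  proof (rule J_unique[OF goodC[OF g0]])
    show "(J1 (fst p) + J2 (snd p), J2 (fst p) - J1 (snd p)) \<in> V0 \<times> V0"
      using c1(1) c2(1) sV unfolding J1_def J2_def by (auto intro: subspace_add subspace_diff)
    fix x' :: "'a \<times> 'a" assume x': "x' \<in> V0 \<times> V0"
    obtain a bb where p: "p = (a, bb)" by (cases p)
    obtain c d where x: "x' = (c, d)" by (cases x')
    have cd: "c \<in> V0" "d \<in> V0" using x' x by auto
    have "complexify_ip q0 (J1 (fst p) + J2 (snd p), J2 (fst p) - J1 (snd p)) x'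
       = (\<eta>1 (br a c) + \<eta>2 (br bb c)) + (\<eta>2 (br a d) - \<eta>1 (br bb d))"
      unfolding complexify_ip_def p x J1_def J2_def
      using c1(2)[OF cd(1)] c1(2)[OF cd(2)] c2(2)[OF cd(1)] c2(2)[OF cd(2)]
      by (simp add: good_simps[OF g0])
    also have "\<dots> = \<eta> (complexify_br br p x')"
      unfolding complexify_br_def p x
      by (simp add: eta_split[OF l, of "br a c - br bb d"] linear_diff[OF l1(1), unfolded \<eta>1_def]
          linear_add[OF l1(2), unfolded \<eta>2_def] \<eta>1_def \<eta>2_def)
    finally show "complexify_ip q0 (J1 (fst p) + J2 (snd p), J2 (fst p) - J1 (snd p)) x' = \<eta> (complexify_br br p x')" .
  qed
  then show ?thesis unfolding J1_def J2_def \<eta>1_def \<eta>2_def .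
qed

lemma pl_all:
  assumes t: "two_step br" and g0: "good V0 q0"
    and HH: "\<And>\<eta>. nonzero_dual_center br \<eta> \<Longrightarrow> dim (Jmap br V0 q0 \<eta> ` V0) = 2"
    and l: "linear \<eta>" and x: "x1 \<in> V0" "x2 \<in> V0" "x3 \<in> V0"
  shows "q0 (Jmap br V0 q0 \<eta> x1) x2 *\<^sub>R Jmap br V0 q0 \<eta> x3 - q0 (Jmap br V0 q0 \<eta> x1) x3 *\<^sub>R Jmap br V0 q0 \<eta> x2
    + q0 (Jmap br V0 q0 \<eta> x2) x3 *\<^sub>R Jmap br V0 q0 \<eta> x1 = 0"
proof (cases "nonzero_dual_center br \<eta>")
  case True
  show ?thesis by (rule pluecker2[OF J_skewop[OF g0 t l] HH[OF True] x])
next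
  case False
  then have "\<forall>w\<in>center br. \<eta> w = 0" using l unfolding nonzero_dual_center_def by blast
  then have "\<And>x. Jmap br V0 q0 \<eta> x = 0" using J_zero[OF g0 t l] by blast
  then show ?thesis by simp
qed

lemma pl_mixed:
  assumes t: "two_step br" and g0: "good V0 q0"
    and HH: "\<And>\<eta>. nonzero_dual_center br \<eta> \<Longrightarrow> dim (Jmap br V0 q0 \<eta> ` V0) = 2"
    and l1: "linear \<eta>1" and l2: "linear \<eta>2" and x: "x1 \<in> V0" "x2 \<in> V0" "x3 \<in> V0"
  defines "J1 \<equiv> Jmap br V0 q0 \<eta>1" and "J2 \<equiv> Jmap br V0 q0 \<eta>2"
  shows "(q0 (J1 x1) x2 *\<^sub>R J2 x3 - q0 (J1 x1) x3 *\<^sub>R J2 x2 + q0 (J1 x2) x3 *\<^sub>R J2 x1)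
    + (q0 (J2 x1) x2 *\<^sub>R J1 x3 - q0 (J2 x1) x3 *\<^sub>R J1 x2 + q0 (J2 x2) x3 *\<^sub>R J1 x1) = 0"
proof -
  have b: "bilinear br" using ts_bil[OF t] .
  have l12: "linear (\<lambda>w. \<eta>1 w + \<eta>2 w)"
    by (rule linearI) (simp_all add: linear_add[OF l1] linear_add[OF l2] linear_scale[OF l1] linear_scale[OF l2] algebra_simps)
  have P1: "q0 (J1 x1) x2 *\<^sub>R J1 x3 - q0 (J1 x1) x3 *\<^sub>R J1 x2 + q0 (J1 x2) x3 *\<^sub>R J1 x1 = 0"
    unfolding J1_def by (rule pl_all[OF t g0 HH l1 x])
  have P2: "q0 (J2 x1) x2 *\<^sub>R J2 x3 - q0 (J2 x1) x3 *\<^sub>R J2 x2 + q0 (J2 x2) x3 *\<^sub>R J2 x1 = 0"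
    unfolding J2_def by (rule pl_all[OF t g0 HH l2 x])
  note P12 = pl_all[OF t g0 HH l12 x]
  have JA: "\<And>x. Jmap br V0 q0 (\<lambda>w. \<eta>1 w + \<eta>2 w) x = J1 x + J2 x"
    unfolding J1_def J2_def by (rule J_add[OF g0 b l1 l2])
  have "0 = (q0 (J1 x1 + J2 x1) x2 *\<^sub>R (J1 x3 + J2 x3) - q0 (J1 x1 + J2 x1) x3 *\<^sub>R (J1 x2 + J2 x2)
      + q0 (J1 x2 + J2 x2) x3 *\<^sub>R (J1 x1 + J2 x1))"
    using P12 unfolding JA by simp
  also have "\<dots> = (q0 (J1 x1) x2 *\<^sub>R J1 x3 - q0 (J1 x1) x3 *\<^sub>R J1 x2 + q0 (J1 x2) x3 *\<^sub>R J1 x1)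
     + (q0 (J2 x1) x2 *\<^sub>R J2 x3 - q0 (J2 x1) x3 *\<^sub>R J2 x2 + q0 (J2 x2) x3 *\<^sub>R J2 x1)
     + ((q0 (J1 x1) x2 *\<^sub>R J2 x3 - q0 (J1 x1) x3 *\<^sub>R J2 x2 + q0 (J1 x2) x3 *\<^sub>R J2 x1)
    + (q0 (J2 x1) x2 *\<^sub>R J1 x3 - q0 (J2 x1) x3 *\<^sub>R J1 x2 + q0 (J2 x2) x3 *\<^sub>R J1 x1))"
    by (simp add: good_simps[OF g0] scaleR_add_left scaleR_add_right algebra_simps)
  finally show ?thesis using P1 P2 by simp
qed

lemma Iop_Iop: "Iop (Iop v) = - v"
  by (simp add: Iop_def prod_eq_iff)

lemma span_Iop:
  assumes "v \<in> span {a, Iop a, b, Iop b}" shows "Iop v \<in> span {a, Iop a, b, Iop b}"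
proof -
  let ?S = "span {a, Iop a, b, Iop b}"
  have "Iop ` {a, Iop a, b, Iop b} \<subseteq> ?S"
    by (auto simp: Iop_Iop span_base span_neg)
  then have "span (Iop ` {a, Iop a, b, Iop b}) \<subseteq> ?S"
    by (simp add: span_minimal subspace_span)
  then show ?thesis using assms span_linear_image[OF Iop_linear, of "{a, Iop a, b, Iop b}"] by blast
qed

lemma upper_span:
  assumes t: "two_step br" and g0: "good V0 q0"
    and HH: "\<And>\<eta>. nonzero_dual_center br \<eta> \<Longrightarrow> dim (Jmap br V0 q0 \<eta> ` V0) = 2"
    and l1: "linear \<eta>1" and l2: "linear \<eta>2" and a: "a1 \<in> V0" "a2 \<in> V0"
  defines "J1 \<equiv> Jmap br V0 q0 \<eta>1" and "J2 \<equiv> Jmap br V0 q0 \<eta>2"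
  assumes nz: "q0 (J1 a1) a2 \<noteq> 0 \<or> q0 (J2 a1) a2 \<noteq> 0"
  shows "\<And>a. a \<in> V0 \<Longrightarrow> (J1 a, J2 a) \<in> span {(J1 a1, J2 a1), Iop (J1 a1, J2 a1), (J1 a2, J2 a2), Iop (J1 a2, J2 a2)}"
proof -
  fix a3 assume a3: "a3 \<in> V0"
  define \<rho> where "\<rho> a = (J1 a, J2 a)" for a
  define S where "S = span {\<rho> a1, Iop (\<rho> a1), \<rho> a2, Iop (\<rho> a2)}"
  define cm where "cm p r v = p *\<^sub>R v + r *\<^sub>R Iop v" for p r and v :: "'a \<times> 'a"
  define w1 where "w1 x y = q0 (J1 x) y" for x y
  define w2 where "w2 x y = q0 (J2 x) y" for x y
  have P1: "w1 a1 a2 *\<^sub>R J1 a3 - w1 a1 a3 *\<^sub>R J1 a2 + w1 a2 a3 *\<^sub>R J1 a1 = 0"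
    unfolding w1_def J1_def by (rule pl_all[OF t g0 HH l1 a a3])
  have P2: "w2 a1 a2 *\<^sub>R J2 a3 - w2 a1 a3 *\<^sub>R J2 a2 + w2 a2 a3 *\<^sub>R J2 a1 = 0"
    unfolding w2_def J2_def by (rule pl_all[OF t g0 HH l2 a a3])
  have PM: "(w1 a1 a2 *\<^sub>R J2 a3 - w1 a1 a3 *\<^sub>R J2 a2 + w1 a2 a3 *\<^sub>R J2 a1)
    + (w2 a1 a2 *\<^sub>R J1 a3 - w2 a1 a3 *\<^sub>R J1 a2 + w2 a2 a3 *\<^sub>R J1 a1) = 0"
    unfolding w1_def w2_def J1_def J2_def by (rule pl_mixed[OF t g0 HH l1 l2 a a3])
  have E: "cm (w1 a1 a2) (w2 a1 a2) (\<rho> a3) - cm (w1 a1 a3) (w2 a1 a3) (\<rho> a2) + cm (w1 a2 a3) (w2 a2 a3) (\<rho> a1)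
    = (w1 a1 a2 *\<^sub>R J1 a3 - w1 a1 a3 *\<^sub>R J1 a2 + w1 a2 a3 *\<^sub>R J1 a1
        - (w2 a1 a2 *\<^sub>R J2 a3 - w2 a1 a3 *\<^sub>R J2 a2 + w2 a2 a3 *\<^sub>R J2 a1),
       (w1 a1 a2 *\<^sub>R J2 a3 - w1 a1 a3 *\<^sub>R J2 a2 + w1 a2 a3 *\<^sub>R J2 a1)
    + (w2 a1 a2 *\<^sub>R J1 a3 - w2 a1 a3 *\<^sub>R J1 a2 + w2 a2 a3 *\<^sub>R J1 a1))"
    unfolding cm_def \<rho>_def Iop_def by (simp add: algebra_simps)
  then have E0: "cm (w1 a1 a2) (w2 a1 a2) (\<rho> a3) = cm (w1 a1 a3) (w2 a1 a3) (\<rho> a2) - cm (w1 a2 a3) (w2 a2 a3) (\<rho> a1)"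
    using P1 P2 PM by (simp add: zero_prod_def algebra_simps)
  have cmS: "cm p r v \<in> S" if "v \<in> S" for p r v
    unfolding cm_def S_def using that span_Iop[of v "\<rho> a1" "\<rho> a2"] unfolding S_def
    by (intro span_add span_mul) auto
  have inS: "\<rho> a1 \<in> S" "\<rho> a2 \<in> S" unfolding S_def by (auto intro: span_base)
  have wS: "cm (w1 a1 a2) (w2 a1 a2) (\<rho> a3) \<in> S"
    unfolding E0 using cmS inS subspace_diff[of S] subspace_span unfolding S_def by metis
  define p where "p = w1 a1 a2"
  define r where "r = w2 a1 a2"
  have pr: "p * p + r * r > 0" using nz unfolding p_def r_def w1_def w2_def
    by (metis add_pos_nonneg add_nonneg_pos not_real_square_gt_zero zero_le_square)
  have inv: "cm p (- r) (cm p r v) = (p * p + r * r) *\<^sub>R v" for v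
    unfolding cm_def by (simp add: linear_add[OF Iop_linear] linear_scale[OF Iop_linear] Iop_Iop algebra_simps)
  have "cm p (- r) (cm p r (\<rho> a3)) \<in> S" using cmS wS unfolding p_def r_def by blast
  then have "(1 / (p * p + r * r)) *\<^sub>R ((p * p + r * r) *\<^sub>R \<rho> a3) \<in> S"
    unfolding inv S_def by (rule span_mul)
  moreover have "(1 / (p * p + r * r)) *\<^sub>R ((p * p + r * r) *\<^sub>R \<rho> a3) = \<rho> a3"
  proof -
    have "\<not> (p = 0 \<and> r = 0)" using pr by auto
    then show ?thesis by (simp, blast)
  qed
  ultimately have "\<rho> a3 \<in> S" by simp
  then show "(J1 a3, J2 a3) \<in> span {(J1 a1, J2 a1), Iop (J1 a1, J2 a1), (J1 a2, J2 a2), Iop (J1 a2, J2 a2)}"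
    unfolding S_def \<rho>_def .
qed

lemma card4_le: "card {a, b, c, d} \<le> 4"
proof -
  have "card (set [a, b, c, d]) \<le> length [a, b, c, d]" by (rule card_length)
  then show ?thesis by simp
qed

lemma part3:
  assumes t: "two_step br" and c0: "complement_of_center br V0" and i0: "inner_product_on V0 ip0"
    and H: "\<forall>\<eta>. nonzero_dual_center br \<eta> \<longrightarrow> dim (Jmap br V0 ip0 \<eta> ` V0) = 2"
  shows "assumptionA (complexify_br br) (V0 \<times> V0) (complexify_ip ip0)"
proof -
  have b: "bilinear br" using ts_bil[OF t] .
  have sV0: "subspace V0" using c0 unfolding complement_of_center_def by blast
  note g0 = ipx_good[OF sV0 i0]
  define q0 where "q0 = ipx V0 ip0"
  have g: "good V0 q0" using g0(1) q0_def by simp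
  have JC0: "Jmap br V0 q0 = Jmap br V0 ip0" unfolding q0_def by (rule Jmap_cong[symmetric]) (simp add: g0(2))
  have HH: "\<And>\<eta>. nonzero_dual_center br \<eta> \<Longrightarrow> dim (Jmap br V0 q0 \<eta> ` V0) = 2"
    using H JC0 by simp
  have gC: "good (V0 \<times> V0) (complexify_ip q0)" by (rule goodC[OF g])
  have ipC: "\<And>x y. x \<in> V0 \<times> V0 \<Longrightarrow> y \<in> V0 \<times> V0 \<Longrightarrow> complexify_ip ip0 x y = complexify_ip q0 x y"
    by (auto simp: complexify_ip_def q0_def g0(2))
  show ?thesis
  proof (rule assA_intro[OF gC ipC, where r="2::nat"])
    fix \<eta> assume n: "nonzero_dual_center (complexify_br br) \<eta>"
    have l: "linear \<eta>" using n unfolding nonzero_dual_center_def by blast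
    define \<eta>1 where "\<eta>1 = (\<lambda>a. \<eta> (a, 0))"
    define \<eta>2 where "\<eta>2 = (\<lambda>b. \<eta> (0, b))"
    have l1: "linear \<eta>1" "linear \<eta>2" using eta_parts_linear[OF l] unfolding \<eta>1_def \<eta>2_def by auto
    define J1 where "J1 = Jmap br V0 q0 \<eta>1"
    define J2 where "J2 = Jmap br V0 q0 \<eta>2"
    define JC where "JC p = (J1 (fst p) + J2 (snd p), J2 (fst p) - J1 (snd p))" for p
    have JCeq: "Jmap (complexify_br br) (V0 \<times> V0) (complexify_ip q0) \<eta> = JC"
      using JC_form[OF t g l] unfolding JC_def J1_def J2_def \<eta>1_def \<eta>2_def by (simp add: fun_eq_iff)
    have lJ1: "linear J1" "linear J2" unfolding J1_def J2_def using J_linear[OF g b] l1 by auto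
    have J1V: "J1 x \<in> V0" "J2 x \<in> V0" for x unfolding J1_def J2_def using J_char(1)[OF g b] l1 by auto
    have sk1: "q0 (J1 x) y = - q0 x (J1 y)" "q0 (J2 x) y = - q0 x (J2 y)" if "x \<in> V0" "y \<in> V0" for x y
      unfolding J1_def J2_def using J_skew[OF g t l1(1) that] J_skew[OF g t l1(2) that] by auto
    have s: "skewop (V0 \<times> V0) (complexify_ip q0) JC"
      unfolding skewop_def
    proof (intro conjI allI ballI)
      show "good (V0 \<times> V0) (complexify_ip q0)" by (rule gC)
      show "linear JC"
        by (rule linearI) (simp_all add: JC_def linear_add[OF lJ1(1)] linear_add[OF lJ1(2)]
            linear_scale[OF lJ1(1)] linear_scale[OF lJ1(2)] algebra_simps)
      show "JC x \<in> V0 \<times> V0" for x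
        unfolding JC_def using J1V sV0 by (auto intro: subspace_add subspace_diff)
      fix x y assume x: "x \<in> V0 \<times> V0" and y: "y \<in> V0 \<times> V0"
      then have "fst x \<in> V0" "snd x \<in> V0" "fst y \<in> V0" "snd y \<in> V0" by auto
      then show "complexify_ip q0 (JC x) y = - complexify_ip q0 x (JC y)"
        unfolding complexify_ip_def JC_def by (simp add: good_simps[OF g] sk1)
    qed
    obtain w where w: "w \<in> center (complexify_br br)" "\<eta> w \<noteq> 0" using n unfolding nonzero_dual_center_def by blast
    have wc: "fst w \<in> center br" "snd w \<in> center br" using center_C[OF t w(1)] by auto
    have "\<eta> w = \<eta>1 (fst w) + \<eta>2 (snd w)" using eta_split[OF l, of "fst w" "snd w"] unfolding \<eta>1_def \<eta>2_def by simp
    then have "\<eta>1 (fst w) \<noteq> 0 \<or> \<eta>2 (snd w) \<noteq> 0" using w(2) by auto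
    then obtain a1 a2 where a: "a1 \<in> V0" "a2 \<in> V0" and nz: "q0 (J1 a1) a2 \<noteq> 0 \<or> q0 (J2 a1) a2 \<noteq> 0"
      and nz1: "J1 a1 \<noteq> 0 \<or> J2 a1 \<noteq> 0"
    proof
      assume "\<eta>1 (fst w) \<noteq> 0"
      then have "nonzero_dual_center br \<eta>1" using wc l1 unfolding nonzero_dual_center_def by blast
      then have "dim (J1 ` V0) = 2" using HH J1_def by simp
      then obtain a1 where "a1 \<in> V0" "J1 a1 \<noteq> 0" using dim_pos_ex[OF lJ1(1), of V0] by auto
      moreover have "q0 (J1 a1) (J1 a1) > 0" using good_pos[OF g J1V(1) \<open>J1 a1 \<noteq> 0\<close>] .
      ultimately show thesis using that[of a1 "J1 a1"] J1V by auto
    next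
      assume "\<eta>2 (snd w) \<noteq> 0"
      then have "nonzero_dual_center br \<eta>2" using wc l1 unfolding nonzero_dual_center_def by blast
      then have "dim (J2 ` V0) = 2" using HH J2_def by simp
      then obtain a1 where "a1 \<in> V0" "J2 a1 \<noteq> 0" using dim_pos_ex[OF lJ1(2), of V0] by auto
      moreover have "q0 (J2 a1) (J2 a1) > 0" using good_pos[OF g J1V(2) \<open>J2 a1 \<noteq> 0\<close>] .
      ultimately show thesis using that[of a1 "J2 a1"] J1V by auto
    qed
    have ne: "\<exists>x\<in>V0 \<times> V0. JC x \<noteq> 0"
    proof
      show "(a1, 0) \<in> V0 \<times> V0" using a sV0 subspace_0 by auto
      show "JC (a1, 0) \<noteq> 0" using nz1 unfolding JC_def by (simp add: linear_0[OF lJ1(1)] linear_0[OF lJ1(2)] zero_prod_def)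
    qed
    define B where "B = {(J1 a1, J2 a1), Iop (J1 a1, J2 a1), (J1 a2, J2 a2), Iop (J1 a2, J2 a2)}"
    have rho: "(J1 a, J2 a) \<in> span B" if "a \<in> V0" for a
      unfolding B_def J1_def J2_def
      by (rule upper_span[OF t g HH l1(1) l1(2) a(1) a(2) nz[unfolded J1_def J2_def] that])
    have sub: "JC ` (V0 \<times> V0) \<subseteq> span B"
    proof
      fix y assume "y \<in> JC ` (V0 \<times> V0)"
      then obtain a bb where ab: "a \<in> V0" "bb \<in> V0" "y = JC (a, bb)" by auto
      have "y = (J1 a, J2 a) - Iop (J1 bb, J2 bb)" unfolding ab JC_def Iop_def by simp
      moreover have "Iop (J1 bb, J2 bb) \<in> span B" using span_Iop rho[OF ab(2)] unfolding B_def by blast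
      ultimately show "y \<in> span B" using rho[OF ab(1)] by (simp add: span_diff)
    qed
    have "dim (JC ` (V0 \<times> V0)) \<le> card B" by (rule dim_le_card[OF sub]) (simp add: B_def)
    also have "card B \<le> 4" unfolding B_def by (rule card4_le)
    finally have up: "dim (JC ` (V0 \<times> V0)) \<le> 4" .
    have IV: "Iop x \<in> V0 \<times> V0" if "x \<in> V0 \<times> V0" for x
      using that sV0 subspace_neg by (auto simp: Iop_def)
    have Isk: "complexify_ip q0 (Iop x) y = - complexify_ip q0 x (Iop y)" for x y
      unfolding complexify_ip_def Iop_def by (simp add: good_simps[OF g] good_sym[OF g, of "snd x"])
    have JI: "JC (Iop x) = - Iop (JC x)" for x
      unfolding JC_def Iop_def by (simp add: linear_neg[OF lJ1(1)] linear_neg[OF lJ1(2)] prod_eq_iff algebra_simps)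
    have fr: "dim (JC ` (V0 \<times> V0)) = 4 \<and> (\<exists>a. a \<noteq> 0 \<and> (\<forall>w\<in>JC ` (V0 \<times> V0). JC (JC w) = a *\<^sub>R w))"
      by (rule frame4[OF s Iop_linear IV Iop_Iop Isk JI ne up])
    show "skewop (V0 \<times> V0) (complexify_ip q0) (Jmap (complexify_br br) (V0 \<times> V0) (complexify_ip q0) \<eta>) \<and>
        dim (Jmap (complexify_br br) (V0 \<times> V0) (complexify_ip q0) \<eta> ` (V0 \<times> V0)) = 2 * 2 \<and>
        (\<exists>a. a \<noteq> 0 \<and> (\<forall>w\<in>Jmap (complexify_br br) (V0 \<times> V0) (complexify_ip q0) \<eta> ` (V0 \<times> V0).
          Jmap (complexify_br br) (V0 \<times> V0) (complexify_ip q0) \<eta> (Jmap (complexify_br br) (V0 \<times> V0) (complexify_ip q0) \<eta> w) = a *\<^sub>R w))"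
      unfolding JCeq using s fr by simp
  qed (simp_all add: zero_less_one)
qed



theorem proposition6p1:
  fixes br :: "'g::euclidean_space \<Rightarrow> 'g \<Rightarrow> 'g"
    and V0 :: "'g set" and ip0 :: "'g \<Rightarrow> 'g \<Rightarrow> real"
  assumes "two_step br"
    and "complement_of_center br V0"
    and "inner_product_on V0 ip0"
    and "\<forall>\<eta>. nonzero_dual_center br \<eta> \<longrightarrow> dim (Jmap br V0 ip0 \<eta> ` V0) = 2"
  shows "assumptionA br V0 ip0
    \<and> (\<forall>V ip. complement_of_center br V \<and> inner_product_on V ip \<longrightarrow> assumptionA br V ip)
    \<and> assumptionA (complexify_br br) (V0 \<times> V0) (complexify_ip ip0)"
proof -
  have P2: "\<forall>V ip. complement_of_center br V \<and> inner_product_on V ip \<longrightarrow> assumptionA br V ip"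
    using part12[OF assms(1,2,3,4)] by blast
  show ?thesis using P2 assms(2,3) part3[OF assms(1,2,3,4)] by blast
qed

end
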